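(* If $M_C$ is a semi-positive or semi-negative mixed cycle of arbitrary order $n\ge3$, or a negative mixed cycle of even order, then $\rho(M_C)<2$.
   Context: A mixed graph is obtained from a finite simple graph by orienting some of its edges. With $\omega=\frac{1+\mathbf{i}\sqrt3}{2}$, the matrix $N=(n_{st})$ has entry $\omega$ for an arc from $u_s$ to $u_t$, $\bar\omega$ for an arc from $u_t$ to $u_s$, $1$ for an undirected edge, $0$ otherwise; $\rho$ is the maximum absolute value of an eigenvalue of $N$. A mixed cycle has underlying graph a cycle $v_1\cdots v_nv_1$ and weight $n_{12}\cdots n_{n1}$; it is negative if the weight is $-1$, semi-positive if it is $\omega$ or $\bar\omega$, semi-negative if it is $-\omega$ or $-\bar\omega$. *)

theory Defs
  imports "Jordan_Normal_Form.Spectral_Radius"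
begin

text \<open>The sixth root of unity omega = (1 + i sqrt 3)/2.\<close>
definition omega :: complex where
  "omega = Complex (1/2) (sqrt 3 / 2)"

text \<open>A mixed graph on vertex set {0..<n}: U is the (symmetric) undirected-edge relation,
  A s t means there is an arc from s to t.\<close>
definition mixed_graph :: "nat \<Rightarrow> (nat \<Rightarrow> nat \<Rightarrow> bool) \<Rightarrow> (nat \<Rightarrow> nat \<Rightarrow> bool) \<Rightarrow> bool" where
  "mixed_graph n U A \<longleftrightarrow>
     (\<forall>s t. U s t \<longrightarrow> s < n \<and> t < n \<and> s \<noteq> t \<and> U t s) \<and>
     (\<forall>s t. A s t \<longrightarrow> s < n \<and> t < n \<and> s \<noteq> t \<and> \<not> A t s \<and> \<not> U s t)"

text \<open>Entry of the Hermitian adjacency matrix of the second kind.\<close>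
definition mixed_entry :: "(nat \<Rightarrow> nat \<Rightarrow> bool) \<Rightarrow> (nat \<Rightarrow> nat \<Rightarrow> bool) \<Rightarrow> nat \<Rightarrow> nat \<Rightarrow> complex" where
  "mixed_entry U A s t =
     (if A s t then omega else if A t s then cnj omega else if U s t then 1 else 0)"

definition herm_N :: "nat \<Rightarrow> (nat \<Rightarrow> nat \<Rightarrow> bool) \<Rightarrow> (nat \<Rightarrow> nat \<Rightarrow> bool) \<Rightarrow> complex mat" where
  "herm_N n U A = mat n n (\<lambda>(s, t). mixed_entry U A s t)"

definition underlying_adj :: "(nat \<Rightarrow> nat \<Rightarrow> bool) \<Rightarrow> (nat \<Rightarrow> nat \<Rightarrow> bool) \<Rightarrow> nat \<Rightarrow> nat \<Rightarrow> bool" where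
  "underlying_adj U A s t \<longleftrightarrow> U s t \<or> A s t \<or> A t s"

definition mixed_cycle :: "nat \<Rightarrow> (nat \<Rightarrow> nat \<Rightarrow> bool) \<Rightarrow> (nat \<Rightarrow> nat \<Rightarrow> bool) \<Rightarrow> bool" where
  "mixed_cycle n U A \<longleftrightarrow> 3 \<le> n \<and> mixed_graph n U A \<and>
     (\<forall>s<n. \<forall>t<n. underlying_adj U A s t \<longleftrightarrow> (t = Suc s mod n \<or> s = Suc t mod n))"

definition cycle_weight :: "nat \<Rightarrow> (nat \<Rightarrow> nat \<Rightarrow> bool) \<Rightarrow> (nat \<Rightarrow> nat \<Rightarrow> bool) \<Rightarrow> complex" where
  "cycle_weight n U A = (\<Prod>i<n. mixed_entry U A i (Suc i mod n))"

definition negative_cycle where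
  "negative_cycle n U A \<longleftrightarrow> cycle_weight n U A = -1"
definition semi_positive_cycle where
  "semi_positive_cycle n U A \<longleftrightarrow> cycle_weight n U A = omega \<or> cycle_weight n U A = cnj omega"
definition semi_negative_cycle where
  "semi_negative_cycle n U A \<longleftrightarrow> cycle_weight n U A = - omega \<or> cycle_weight n U A = - cnj omega"

end

theory Submission imports Defs begin

lemma eq_of_norms:
  fixes a b :: complex
  assumes "cmod a = m" "cmod b = m" "cmod (a + b) = 2 * m"
  shows "a = b"
proof -
  have "(cmod (a+b))^2 + (cmod (a-b))^2 = 2*(cmod a)^2 + 2*(cmod b)^2"
    unfolding cmod_power2 by (simp add: power2_eq_square algebra_simps)
  then have "(cmod (a-b))^2 = 0" using assms by (simp add: power2_eq_square)
  then show ?thesis by simp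
qed

lemma core:
  fixes n :: nat and v c :: "nat \<Rightarrow> complex" and l :: complex
  assumes n3: "3 \<le> n"
    and c1: "\<forall>i<n. cmod (c i) = 1"
    and eq: "\<forall>i<n. l * v i = c i * v (Suc i mod n) + cnj (c ((i + n - 1) mod n)) * v ((i + n - 1) mod n)"
    and nz: "\<exists>i<n. v i \<noteq> 0"
    and big: "2 \<le> cmod l"
  shows "(\<Prod>i<n. c i) = (l/2)^n \<and> (l/2)^2 = 1"
proof -
  define p where "p i = (i + n - 1) mod n" for i
  define s where "s i = Suc i mod n" for i
  have n0: "0 < n" using n3 by simp
  have sp: "p (s i) = i" if "i < n" for i
    using that n3 unfolding p_def s_def
    by (cases "Suc i < n") (auto simp: mod_if)
  have sl: "s i < n" "p i < n" for i using n0 unfolding s_def p_def by auto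
  define x where "x i = cmod (v i)" for i
  define M where "M = Max (x ` {..<n})"
  have xM: "x i \<le> M" if "i < n" for i unfolding M_def using that by auto
  obtain i0 where i0: "i0 < n" "x i0 = M"
    using Max_in[of "x ` {..<n}"] n0 unfolding M_def by fastforce
  have Mpos: "M > 0"
  proof -
    obtain i where "i < n" "v i \<noteq> 0" using nz by auto
    then have "x i > 0" unfolding x_def by simp
    with xM[OF \<open>i<n\<close>] show ?thesis by simp
  qed
  have key: "x (s i) = M \<and> x (p i) = M \<and> c i * v (s i) = cnj (c (p i)) * v (p i)"
    if "i < n" "x i = M" for i
  proof -
    define a where "a = c i * v (s i)"
    define b where "b = cnj (c (p i)) * v (p i)"
    have na: "cmod a = x (s i)" unfolding a_def x_def using c1 that(1) by (simp add: norm_mult)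
    have nb: "cmod b = x (p i)" unfolding b_def x_def using c1 sl by (simp add: norm_mult)
    have "2 * M \<le> cmod l * M" using big Mpos by (simp add: mult_right_mono)
    also have "\<dots> = cmod (a + b)" using eq that unfolding a_def b_def s_def p_def x_def
      by (metis norm_mult)
    also have "\<dots> \<le> cmod a + cmod b" by (rule norm_triangle_ineq)
    finally have h: "2 * M \<le> cmod a + cmod b" "cmod (a+b) \<ge> 2 * M"
      using \<open>2 * M \<le> cmod l * M\<close> \<open>cmod l * M = cmod (a + b)\<close> by auto
    have "cmod a \<le> M" "cmod b \<le> M" using na nb xM sl by auto
    then have "cmod a = M" "cmod b = M" using h by auto
    moreover have "cmod (a+b) = 2 * M" using h \<open>cmod a = M\<close> \<open>cmod b = M\<close>
      norm_triangle_ineq[of a b] by auto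
    ultimately have "a = b" using eq_of_norms by blast
    then show ?thesis using na nb \<open>cmod a = M\<close> \<open>cmod b = M\<close> unfolding a_def b_def by auto
  qed
  have allk: "x ((i0 + k) mod n) = M" for k
  proof (induction k)
    case 0 then show ?case using i0 by simp
  next
    case (Suc k)
    have "(i0 + Suc k) mod n = s ((i0 + k) mod n)" unfolding s_def by (simp add: mod_Suc_eq)
    then show ?case using key[OF _ Suc] n0 by simp
  qed
  have allM: "x j = M" if "j < n" for j
  proof -
    have "(i0 + (n - i0 + j)) mod n = j" using that i0 by simp
    then show ?thesis using allk[of "n - i0 + j"] by simp
  qed
  define e where "e = l / 2"
  have rel: "c i * v (s i) = e * v i" if "i < n" for i
  proof -
    have "l * v i = c i * v (s i) + cnj (c (p i)) * v (p i)"
      using eq that unfolding s_def p_def by auto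
    then show ?thesis using key[OF that allM[OF that]] unfolding e_def by simp
  qed
  have vnz: "v i \<noteq> 0" if "i < n" for i using allM[OF that] Mpos unfolding x_def by auto
  have e2: "e^2 = 1"
  proof -
    have r1: "c i0 * v (s i0) = e * v i0" using rel i0 by simp
    have r2: "cnj (c i0) * v i0 = e * v (s i0)"
      using key[OF sl(1) allM[OF sl(1)], of i0] rel[OF sl(1), of i0] sp[OF i0(1)] by simp
    have "(c i0 * cnj (c i0)) * (v i0 * v (s i0)) = (c i0 * v (s i0)) * (cnj (c i0) * v i0)"
      by (simp add: ac_simps)
    also have "\<dots> = (e * v i0) * (e * v (s i0))" using r1 r2 by simp
    also have "\<dots> = e^2 * (v i0 * v (s i0))" by (simp add: power2_eq_square ac_simps)
    finally have "(c i0 * cnj (c i0)) * (v i0 * v (s i0)) = e^2 * (v i0 * v (s i0))" .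
    moreover have "c i0 * cnj (c i0) = 1" using c1 i0
      using complex_norm_square[of "c i0"] by simp
    ultimately show ?thesis using vnz[OF i0(1)] vnz[OF sl(1)] by simp
  qed
  have "(\<Prod>i<n. c i * v (s i)) = (\<Prod>i<n. e * v i)" using rel by simp
  then have P: "(\<Prod>i<n. c i) * (\<Prod>i<n. v (s i)) = e^n * (\<Prod>i<n. v i)"
    by (simp add: prod.distrib)
  obtain m where m: "n = Suc m" using n0 by (cases n) auto
  have "(\<Prod>i<n. v (s i)) = (\<Prod>i<n. v i)"
  proof -
    have A: "(\<Prod>i<Suc m. v (Suc i mod Suc m)) = (\<Prod>i<m. v (Suc i mod Suc m)) * v (Suc m mod Suc m)"
      by (rule prod.lessThan_Suc)
    have B: "(\<Prod>i<m. v (Suc i mod Suc m)) = (\<Prod>i<m. v (Suc i))" by (rule prod.cong) auto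
    have C: "(\<Prod>i<Suc m. v i) = v 0 * (\<Prod>i<m. v (Suc i))" by (rule prod.lessThan_Suc_shift)
    show ?thesis unfolding m s_def A B C by simp
  qed
  moreover have "(\<Prod>i<n. v i) \<noteq> 0" using vnz by simp
  ultimately have "(\<Prod>i<n. c i) = e^n" using P by simp
  then show ?thesis using e2 unfolding e_def by simp
qed

lemma cmod_omega: "cmod omega = 1"
  unfolding omega_def cmod_def by (simp add: power_divide)

lemma entry_cnj:
  assumes "mixed_graph n U A"
  shows "mixed_entry U A t s = cnj (mixed_entry U A s t)"
  using assms unfolding mixed_graph_def mixed_entry_def by auto

lemma entry_zero:
  assumes "\<not> underlying_adj U A s t"
  shows "mixed_entry U A s t = 0"
  using assms unfolding underlying_adj_def mixed_entry_def by auto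

lemma entry_norm:
  assumes "mixed_graph n U A" "underlying_adj U A s t"
  shows "cmod (mixed_entry U A s t) = 1"
  using assms cmod_omega unfolding underlying_adj_def mixed_entry_def mixed_graph_def by auto

lemma row_eq:
  assumes mc: "mixed_cycle n U A" and i: "i < n" and v: "v \<in> carrier_vec n"
  shows "(herm_N n U A *\<^sub>v v) $ i =
     mixed_entry U A i (Suc i mod n) * v $ (Suc i mod n) +
     cnj (mixed_entry U A ((i + n - 1) mod n) (Suc ((i + n - 1) mod n) mod n)) * v $ ((i + n - 1) mod n)"
proof -
  have n3: "3 \<le> n" and mg: "mixed_graph n U A"
    and adj: "\<And>s t. s < n \<Longrightarrow> t < n \<Longrightarrow> underlying_adj U A s t \<longleftrightarrow> (t = Suc s mod n \<or> s = Suc t mod n)"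
    using mc unfolding mixed_cycle_def by auto
  define s where "s = Suc i mod n"
  define p where "p = (i + n - 1) mod n"
  have sp: "Suc p mod n = i" unfolding p_def using i n3
    by (cases i) (auto simp: mod_if)
  have sn: "s < n" "p < n" unfolding s_def p_def using n3 by auto
  have spne: "s \<noteq> p" unfolding s_def p_def using i n3
    by (cases "Suc i < n"; cases i) (auto simp: mod_if)
  have z: "mixed_entry U A i j = 0" if "j < n" "j \<noteq> s" "j \<noteq> p" for j
  proof (rule entry_zero)
    show "\<not> underlying_adj U A i j"
    proof
      assume "underlying_adj U A i j"
      then have "j = s \<or> i = Suc j mod n" using adj[OF i that(1)] unfolding s_def by auto
      moreover have "j = p" if "i = Suc j mod n"
        unfolding p_def using that \<open>j < n\<close> n3
        by (cases "Suc j < n") (auto simp: mod_if)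
      ultimately show False using that by auto
    qed
  qed
  have "(herm_N n U A *\<^sub>v v) $ i = (\<Sum>j\<in>{0..<n}. mixed_entry U A i j * v $ j)"
    using i v unfolding herm_N_def by (simp add: scalar_prod_def)
  also have "\<dots> = (\<Sum>j\<in>{s, p}. mixed_entry U A i j * v $ j)"
    by (rule sum.mono_neutral_right) (use sn z in auto)
  also have "\<dots> = mixed_entry U A i s * v $ s + mixed_entry U A i p * v $ p"
    using spne by simp
  also have "mixed_entry U A i p = cnj (mixed_entry U A p (Suc p mod n))"
    using entry_cnj[OF mg] sp by metis
  finally show ?thesis unfolding s_def p_def .
qed


theorem lemma6p11:
  fixes n :: nat and U A :: "nat \<Rightarrow> nat \<Rightarrow> bool"
  assumes "mixed_cycle n U A"
    and "semi_positive_cycle n U A \<or> semi_negative_cycle n U A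
         \<or> (negative_cycle n U A \<and> even n)"
  shows "spectral_radius (herm_N n U A) < 2"
proof (rule ccontr)
  assume "\<not> spectral_radius (herm_N n U A) < 2"
  then have ge: "2 \<le> spectral_radius (herm_N n U A)" by simp
  have n3: "3 \<le> n" and mg: "mixed_graph n U A"
    and adj: "\<And>s t. s < n \<Longrightarrow> t < n \<Longrightarrow> underlying_adj U A s t \<longleftrightarrow> (t = Suc s mod n \<or> s = Suc t mod n)"
    using assms(1) unfolding mixed_cycle_def by auto
  have N: "herm_N n U A \<in> carrier_mat n n" unfolding herm_N_def by simp
  obtain l where l: "l \<in> spectrum (herm_N n U A)" "spectral_radius (herm_N n U A) = cmod l"
    using spectral_radius_mem_max(1)[OF N] n3 by force
  then obtain v where ev: "eigenvector (herm_N n U A) v l"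
    unfolding spectrum_def eigenvalue_def by auto
  then have v: "v \<in> carrier_vec n" "v \<noteq> 0\<^sub>v n" "herm_N n U A *\<^sub>v v = l \<cdot>\<^sub>v v"
    unfolding eigenvector_def using N by auto
  define c where "c i = mixed_entry U A i (Suc i mod n)" for i
  have c1: "\<forall>i<n. cmod (c i) = 1"
    unfolding c_def using entry_norm[OF mg] adj n3 by auto
  have eq: "\<forall>i<n. l * v $ i = c i * v $ (Suc i mod n) + cnj (c ((i + n - 1) mod n)) * v $ ((i + n - 1) mod n)"
  proof (intro allI impI)
    fix i assume i: "i < n"
    have "l * v $ i = (herm_N n U A *\<^sub>v v) $ i" using v i by simp
    then show "l * v $ i = c i * v $ (Suc i mod n) + cnj (c ((i + n - 1) mod n)) * v $ ((i + n - 1) mod n)"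
      using row_eq[OF assms(1) i v(1)] unfolding c_def by simp
  qed
  have nz: "\<exists>i<n. v $ i \<noteq> 0"
  proof (rule ccontr)
    assume "\<not> (\<exists>i<n. v $ i \<noteq> 0)"
    then have "v = 0\<^sub>v n" using v(1) by (intro eq_vecI) auto
    then show False using v(2) by simp
  qed
  from core[OF n3 c1 eq nz] ge l(2)
  have w: "cycle_weight n U A = (l/2)^n" and e2: "(l/2)^2 = 1"
    unfolding cycle_weight_def c_def by auto
  from e2 have "l/2 = 1 \<or> l/2 = -1" by (simp add: power2_eq_1_iff)
  then have wv: "cycle_weight n U A = 1 \<or> (cycle_weight n U A = -1 \<and> odd n)"
    using w by (cases "even n") auto
  have o1: "omega \<noteq> 1" "omega \<noteq> -1" "cnj omega \<noteq> 1" "cnj omega \<noteq> -1"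
    "- omega \<noteq> 1" "- omega \<noteq> -1" "- cnj omega \<noteq> 1" "- cnj omega \<noteq> -1"
    unfolding omega_def by (auto simp: complex_eq_iff)
  show False using assms(2) wv o1
    unfolding semi_positive_cycle_def semi_negative_cycle_def negative_cycle_def by auto
qed

end
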